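(* Let $G$ be the lattice $\mathbb Z$, unweighted, with $\mu\equiv1$. Let $x_0\in\mathbb Z$, $r\in\mathbb N$, and let $u:[0,\infty)\times\mathbb Z\to(0,\infty)$, $C^1$ in $t$, satisfy $\partial_tu=\Delta u$ on $[0,\infty)\times\bar B_{2r}(x_0)$. Then there is an absolute constant $C>0$ (independent of $x_0$, $r$, $u$) such that $$\partial_t(\log u)\ge\Psi_\Upsilon(\log u)-\varphi(t)-\frac Cr\quad\text{on }(0,\infty)\times\bar B_r(x_0),$$ where $\varphi$ is the relaxation function of the CD-function $F(a)=2e^{-a/2}\big(\Upsilon(a)+\Upsilon(-a)\big)$.
   Context: $\Delta u(x)=u(x+1)-2u(x)+u(x-1)$; $\Psi_H(v)(x)=\sum_{y\in\{x\pm1\}}H(v(y)-v(x))$; $\Upsilon(z)=e^z-1-z$; $\bar B_\rho(x_0)=\{y\in\mathbb Z:|y-x_0|\le\rho\}$. The relaxation function of a CD-function $F$ (continuous $F:[0,\infty)\to[0,\infty)$, $F(0)=0$, $F(x)/x$ strictly increasing, $\int_1^\infty dr/F<\infty$) is the unique positive solution $\varphi$ of $\dot\varphi+F(\varphi)=0$ on $(0,\infty)$ with $\varphi(0+)=\infty$. *)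

theory Defs
  imports "HOL-Analysis.Analysis"
begin

definition lap :: "(int \<Rightarrow> real) \<Rightarrow> int \<Rightarrow> real" where
  "lap u x = u (x + 1) - 2 * u x + u (x - 1)"

definition Psi :: "(real \<Rightarrow> real) \<Rightarrow> (int \<Rightarrow> real) \<Rightarrow> int \<Rightarrow> real" where
  "Psi H v x = H (v (x + 1) - v x) + H (v (x - 1) - v x)"

definition Upsilon :: "real \<Rightarrow> real" where
  "Upsilon z = exp z - 1 - z"

definition cball_Z :: "int \<Rightarrow> nat \<Rightarrow> int set" where
  "cball_Z x0 \<rho> = {y. \<bar>y - x0\<bar> \<le> int \<rho>}"

definition F57 :: "real \<Rightarrow> real" where
  "F57 a = 2 * exp (- a / 2) * (Upsilon a + Upsilon (- a))"

definition is_relaxation_function :: "(real \<Rightarrow> real) \<Rightarrow> (real \<Rightarrow> real) \<Rightarrow> bool" where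
  "is_relaxation_function F \<phi> \<longleftrightarrow>
     (\<forall>t>0. \<phi> t > 0 \<and> (\<phi> has_real_derivative (- F (\<phi> t))) (at t)) \<and>
     filterlim \<phi> at_top (at_right 0)"

end

theory Submission
  imports Defs
begin


lemma core_poly:
  fixes z m h :: real
  assumes z: "z > 1" and m: "m > 1 + h" and h: "h > 0"
  shows "((z*m - 1)^2 - h^2)^2 * z^3 > (z-1)^4 * (z*m)^3"
proof -
  define y where "y = z*m"
  have m1: "m > 1" using m h by linarith
  have ym: "y \<ge> m" using z m1 unfolding y_def by (simp add: mult_right_mono)
  have "(y-1)^2 - (y-m)^2 = (m-1)*(2*y-1-m)" by (simp add: power2_eq_square algebra_simps)
  also have "\<dots> \<ge> (m-1)*(m-1)" using ym m1 by (intro mult_left_mono) auto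
  finally have A: "(y-1)^2 - (y-m)^2 \<ge> (m-1)^2" by (simp add: power2_eq_square)
  have "(m-1)^2 > h^2" using m h by (intro power_strict_mono) auto
  hence D: "(y-1)^2 - h^2 > (m*(z-1))^2" using A unfolding y_def by (simp add: algebra_simps)
  have "((y-1)^2 - h^2)^2 > ((m*(z-1))^2)^2"
    using D by (intro power_strict_mono) auto
  moreover have "((m*(z-1))^2)^2 = m^4 * (z-1)^4" by (simp add: power_mult_distrib flip: power_mult)
  moreover have "m^4 * (z-1)^4 \<ge> m^3 * (z-1)^4"
  proof -
    have "m^4 = m * m^3" by (simp add: power_numeral_reduce)
    hence "m^4 \<ge> m^3" using m1 by (simp add: mult_right_mono[of 1 m "m^3", simplified])
    thus ?thesis by (intro mult_right_mono) auto
  qed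
  ultimately have "((y-1)^2 - h^2)^2 > m^3 * (z-1)^4" by linarith
  hence "((y-1)^2 - h^2)^2 * z^3 > m^3 * (z-1)^4 * z^3" using z by (intro mult_strict_right_mono) auto
  thus ?thesis unfolding y_def by (simp add: power_mult_distrib algebra_simps)
qed

lemma core:
  fixes a b c p q f h hp hm :: real
  assumes a: "a > 0" and b: "b > 0" and c: "c > 0" and p: "p > 0" and q: "q > 0"
    and f: "f > 0" and h: "h > 0"
    and eq: "2 * ln c - ln a - ln b = f + h"
    and sp: "(2 * ln a - ln p - ln c \<le> f + hp \<and> hp - h \<le> h^2) \<or> h \<ge> 1"
    and sm: "(2 * ln b - ln q - ln c \<le> f + hm \<and> hm - h \<le> h^2) \<or> h \<ge> 1"
  shows "(p + c - 2*a)/a + (q + c - 2*b)/b - 2*(a + b - 2*c)/c > F57 f"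
proof -
  define y where "y = c^2/(a*b)"
  have ypos: "y > 0" using a b c by (simp add: y_def)
  have "ln y = 2 * ln c - ln a - ln b" using a b c
    by (simp add: y_def ln_div ln_mult ln_realpow)
  hence yexp: "y = exp (f + h)" using eq ypos by (metis exp_ln)
  define z where "z = exp f"
  define m where "m = exp h"
  have z1: "z > 1" using f by (simp add: z_def)
  have m1: "m > 1 + h" using h exp_minus_greater[of "-h"] by (simp add: m_def)
  have yzm: "y = z*m" by (simp add: yexp z_def m_def exp_add)
  have side: "c*p'/a'^2 \<ge> (1 - h^2)/y"
    if a': "a' > 0" and p': "p' > 0"
    and s: "(2 * ln a' - ln p' - ln c \<le> f + hp' \<and> hp' - h \<le> h^2) \<or> h \<ge> 1" for a' p' hp'
    using s
  proof
    assume H: "2 * ln a' - ln p' - ln c \<le> f + hp' \<and> hp' - h \<le> h^2"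
    have "ln (c*p'/a'^2) = ln c + ln p' - 2 * ln a'" using a' p' c
      by (simp add: ln_div ln_mult ln_realpow)
    hence "ln (c*p'/a'^2) \<ge> - (f+h) + (- (hp' - h))" using H by linarith
    hence "c*p'/a'^2 \<ge> exp (- (f+h) + (- (hp' - h)))"
      using a' p' c by (metis exp_le_cancel_iff exp_ln divide_pos_pos mult_pos_pos zero_less_power)
    also have "exp (- (f+h) + (- (hp' - h))) = (1/y) * exp (- (hp' - h))"
    proof -
      have "exp (- (f+h) + (- (hp' - h))) * exp (f+h) = exp (- (hp' - h))"
        by (simp add: exp_add[symmetric])
      thus ?thesis using ypos by (simp add: yexp field_simps)
    qed
    also have "\<dots> \<ge> (1/y) * (1 - (hp' - h))"
      using ypos exp_ge_add_one_self[of "- (hp' - h)"] by (intro mult_left_mono) (auto simp del: exp_ge_add_one_self)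
    also have "(1/y) * (1 - (hp' - h)) \<ge> (1/y) * (1 - h^2)"
      using ypos H by (intro mult_left_mono) auto
    finally show ?thesis by simp
  next
    assume "h \<ge> 1"
    hence "1 - h^2 \<le> 0" using mult_mono[of 1 h 1 h] by (simp add: power2_eq_square)
    hence "(1-h^2)/y \<le> 0" using ypos by (simp add: divide_nonpos_pos)
    also have "0 \<le> c*p'/a'^2" using a' p' c by simp
    finally show ?thesis .
  qed
  have spx: "c*p/a^2 \<ge> (1 - h^2)/y" by (rule side[OF a p sp])
  have smx: "c*q/b^2 \<ge> (1 - h^2)/y" by (rule side[OF b q sm])
  define W where "W = y - 2 + (1 - h^2)/y"
  have W_eq: "W = ((y-1)^2 - h^2)/y" using ypos by (simp add: W_def field_simps power2_eq_square)
  have ym: "y > m" using z1 m1 h yzm by simp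
  have "(y-1)^2 > h^2" using ym m1 h by (intro power_strict_mono) auto
  hence Wpos: "W > 0" using W_eq ypos by simp
  have LHS: "(p + c - 2*a)/a + (q + c - 2*b)/b - 2*(a + b - 2*c)/c
     = (a/c)*(c*p/a^2 + y - 2) + (b/c)*(c*q/b^2 + y - 2)"
    using a b c by (simp add: y_def field_simps power2_eq_square)
  have "(a/c)*(c*p/a^2 + y - 2) + (b/c)*(c*q/b^2 + y - 2) \<ge> (a/c)*W + (b/c)*W"
    using spx smx a b c unfolding W_def by (intro add_mono mult_left_mono) auto
  hence L1: "(p + c - 2*a)/a + (q + c - 2*b)/b - 2*(a + b - 2*c)/c \<ge> ((a+b)/c)*W"
    using LHS by (simp add: add_divide_distrib distrib_right)
  have P0: "((a+b)/c)*W > 0" using a b c Wpos by simp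
  have sq1: "((a+b)/c)^2 \<ge> 4/y"
  proof -
    have "(a+b)^2 - 4*a*b = (a-b)^2" by (simp add: power2_eq_square algebra_simps)
    hence "(a+b)^2 \<ge> 4*a*b" by (metis diff_ge_0_iff_ge zero_le_power2)
    thus ?thesis using a b c by (simp add: y_def field_simps power2_eq_square)
  qed
  have Fz: "F57 f = 2 * exp (-f/2) * ((z-1)^2/z)"
    using z1 by (simp add: F57_def Upsilon_def z_def exp_minus field_simps power2_eq_square)
  have F0: "F57 f \<ge> 0" using Fz z1 by simp
  have e2: "exp (-f/2)^2 = 1/z"
  proof -
    have "exp (-f/2)^2 = exp (-f/2 + -f/2)" by (simp only: power2_eq_square exp_add)
    also have "-f/2 + -f/2 = -f" by simp
    finally have "exp (-f/2)^2 = exp (-f)" .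
    thus ?thesis by (simp add: z_def exp_minus field_simps)
  qed
  have F2: "(F57 f)^2 = 4 * (z-1)^4 / z^3"
  proof -
    have "(F57 f)^2 = 4 * exp (-f/2)^2 * ((z-1)^2)^2 / z^2"
      by (simp add: Fz power_mult_distrib power_divide)
    also have "\<dots> = 4 * (1/z) * ((z-1)^2)^2 / z^2" unfolding e2 ..
    also have "\<dots> = 4 * (z-1)^4 / z^3" using z1
      by (simp add: field_simps flip: power_mult) (simp add: power2_eq_square power3_eq_cube)
    finally show ?thesis .
  qed
  have cp: "((y - 1)^2 - h^2)^2 * z^3 > (z-1)^4 * y^3" using core_poly[OF z1 m1 h] yzm by simp
  hence cp2: "((y - 1)^2 - h^2)^2 / y^3 > (z-1)^4 / z^3" using ypos z1
    by (simp add: field_simps)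
  have "(((a+b)/c)*W)^2 = ((a+b)/c)^2 * W^2" by (rule power_mult_distrib)
  also have "\<dots> \<ge> (4/y) * W^2" using sq1 by (intro mult_right_mono) auto
  also have "(4/y) * W^2 = 4 * (((y - 1)^2 - h^2)^2 / y^3)" using ypos
    by (simp add: W_eq power_divide field_simps power2_eq_square power3_eq_cube)
  finally have "(((a+b)/c)*W)^2 > (F57 f)^2" using cp2 F2 by simp
  hence "((a+b)/c)*W > F57 f" using P0 by (meson power_less_imp_less_base less_imp_le)
  thus ?thesis using L1 by linarith
qed


lemma hh_step:
  fixes k k' :: int
  assumes k: "k \<ge> 1" and k': "k' \<ge> 1" and kk: "k' = k + 1 \<or> k' = k - 1"
  shows "2 / real_of_int k' - 2 / real_of_int k \<le> (2 / real_of_int k)^2"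
  using kk
proof
  assume "k' = k + 1"
  hence "real_of_int k' \<ge> real_of_int k" by simp
  hence "2 / real_of_int k' \<le> 2 / real_of_int k" using k by (intro divide_left_mono) auto
  thus ?thesis by (smt (verit) zero_le_power2)
next
  assume e: "k' = k - 1"
  define K where "K = real_of_int k"
  have K2: "K \<ge> 2" using e k' by (simp add: K_def)
  have rk': "real_of_int k' = K - 1" using e by (simp add: K_def)
  have "2 / (K - 1) - 2 / K = 2 / (K * (K - 1))" using K2 by (simp add: field_simps)
  also have "\<dots> \<le> 4 / K^2" using K2 by (simp add: field_simps power2_eq_square)
  finally show ?thesis by (simp add: rk' K_def[symmetric] power_divide)
qed

lemma main:
  fixes x0 :: int and r :: nat and u ut :: "real \<Rightarrow> int \<Rightarrow> real" and \<phi> :: "real \<Rightarrow> real"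
  assumes r: "r > 0"
   and pos: "\<forall>t\<ge>0. \<forall>x. u t x > 0"
   and der: "\<forall>x. \<forall>t\<ge>0. ((\<lambda>s. u s x) has_real_derivative ut t x) (at t within {0..})"
   and heat: "\<forall>t\<ge>0. \<forall>x\<in>cball_Z x0 (2 * r). ut t x = lap (u t) x"
   and rel: "is_relaxation_function F57 \<phi>"
  shows "\<forall>t>0. \<forall>x\<in>cball_Z x0 r.
           deriv (\<lambda>s. ln (u s x)) t \<ge> Psi Upsilon (\<lambda>y. ln (u t y)) x - \<phi> t - 2 / real r"
proof -
  define R where "R = 2 * int r - 1"
  have R1: "R \<ge> 1" using r by (simp add: R_def)
  define S where "S = {y::int. \<bar>y - x0\<bar> \<le> R}"
  have finS: "finite S"
  proof -
    have "S \<subseteq> {x0 - R..x0 + R}" by (auto simp: S_def abs_le_iff)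
    thus ?thesis by (rule finite_subset) simp
  qed
  define hh where "hh y = 2 / real_of_int (2 * int r - \<bar>y - x0\<bar>)" for y
  define \<psi> where "\<psi> y t = 2 * ln (u t y) - ln (u t (y+1)) - ln (u t (y - 1))" for y t
  define d\<psi> where "d\<psi> y t = 2 * (ut t y / u t y) - ut t (y+1) / u t (y+1) - ut t (y-1) / u t (y-1)" for y t
  define \<Phi> where "\<Phi> y t = \<psi> y t - \<phi> t - hh y" for y t
  have phipos: "\<And>t. t > 0 \<Longrightarrow> \<phi> t > 0"
    and phider: "\<And>t. t>0 \<Longrightarrow> (\<phi> has_real_derivative - F57 (\<phi> t)) (at t)"
    and philim: "filterlim \<phi> at_top (at_right 0)"
    using rel unfolding is_relaxation_function_def by auto
  have hhpos: "hh y > 0" if "y \<in> S" for y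
    using that by (simp add: hh_def S_def R_def)
  have derat: "((\<lambda>s. u s y) has_real_derivative ut t y) (at t)" if t: "t > 0" for y t
  proof -
    have "((\<lambda>s. u s y) has_real_derivative ut t y) (at t within {0<..})"
      by (rule has_field_derivative_subset[of _ _ _ "{0..}"]) (use der t in auto)
    thus ?thesis using at_within_open[of t "{0<..}"] t by simp
  qed
  have lnder: "((\<lambda>s. ln (u s y)) has_real_derivative ut t y / u t y) (at t)" if t: "t > 0" for y t
  proof -
    have "((\<lambda>s. ln (u s y)) has_real_derivative (1 / u t y) * ut t y) (at t)"
      by (rule DERIV_chain2[OF DERIV_ln_divide derat]) (use pos t in auto)
    thus ?thesis by simp
  qed
  have \<Phi>der: "(\<Phi> y has_real_derivative d\<psi> y t + F57 (\<phi> t)) (at t)" if t: "t > 0" for y t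
  proof -
    have "((\<lambda>s. 2 * ln (u s y) - ln (u s (y+1)) - ln (u s (y - 1)) - \<phi> s - hh y)
      has_real_derivative 2 * (ut t y / u t y) - ut t (y+1) / u t (y+1) - ut t (y-1) / u t (y-1) - (- F57 (\<phi> t)) - 0) (at t)"
      by (intro DERIV_diff DERIV_cmult lnder phider DERIV_const t)
    moreover have "\<Phi> y = (\<lambda>s. 2 * ln (u s y) - ln (u s (y+1)) - ln (u s (y - 1)) - \<phi> s - hh y)"
      by (simp add: fun_eq_iff \<Phi>_def \<psi>_def)
    ultimately show ?thesis by (simp add: d\<psi>_def)
  qed
  have \<Phi>cont: "isCont (\<Phi> y) t" if "t > 0" for y t
    using \<Phi>der[OF that] by (rule DERIV_isCont)
  have ev0: "eventually (\<lambda>t. \<forall>y\<in>S. \<Phi> y t < 0) (at_right 0)"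
  proof (rule eventually_ball_finite[OF finS], rule ballI)
    fix y assume yS: "y \<in> S"
    have uc: "((\<lambda>s. u s z) \<longlongrightarrow> u 0 z) (at_right 0)" for z
    proof -
      have "continuous (at 0 within {0..}) (\<lambda>s. u s z)"
        using der by (intro DERIV_continuous) auto
      hence "((\<lambda>s. u s z) \<longlongrightarrow> u 0 z) (at 0 within {0..})"
        by (simp add: continuous_within)
      thus ?thesis by (rule tendsto_within_subset) auto
    qed
    have "(\<psi> y \<longlongrightarrow> \<psi> y 0) (at_right 0)"
    proof -
      have u0: "u 0 z \<noteq> 0" for z using pos by (metis order.refl less_irrefl)
      show ?thesis unfolding \<psi>_def by (intro tendsto_intros uc u0)
    qed
    hence "LIM t at_right 0. (- \<psi> y t) + \<phi> t :> at_top"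
      by (rule filterlim_tendsto_add_at_top[OF tendsto_minus philim])
    hence "eventually (\<lambda>t. 0 < (- \<psi> y t) + \<phi> t) (at_right 0)"
      unfolding filterlim_at_top_dense by blast
    thus "eventually (\<lambda>t. \<Phi> y t < 0) (at_right 0)"
      by eventually_elim (use hhpos[OF yS] in \<open>auto simp: \<Phi>_def\<close>)
  qed
  then obtain b where b: "b > 0" and bP: "\<And>t. t > 0 \<Longrightarrow> t < b \<Longrightarrow> \<forall>y\<in>S. \<Phi> y t < 0"
    unfolding eventually_at_right_field by auto
  have touch: "d\<psi> x t + F57 (\<phi> t) < 0"
    if t: "t > 0" and xS: "x \<in> S" and z: "\<Phi> x t = 0" and le: "\<forall>y\<in>S. \<Phi> y t \<le> 0" for x t
  proof -
    have t0: "t \<ge> 0" using t by simp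
    define a where "a = u t (x+1)"
    define b' where "b' = u t (x-1)"
    define c where "c = u t x"
    define p where "p = u t (x+1+1)"
    define q where "q = u t (x-1-1)"
    have a: "a > 0" and b': "b' > 0" and c: "c > 0" and p: "p > 0" and q: "q > 0"
      using pos t0 by (auto simp: a_def b'_def c_def p_def q_def)
    have xb: "\<bar>x - x0\<bar> \<le> 2 * int r - 1" using xS by (simp add: S_def R_def)
    have inB: "x \<in> cball_Z x0 (2*r)" "x+1 \<in> cball_Z x0 (2*r)" "x-1 \<in> cball_Z x0 (2*r)"
      using xb by (auto simp: cball_Z_def)
    have hx: "ut t x = a - 2*c + b'"
    proof -
      have "ut t x = lap (u t) x" using heat t0 inB(1) by blast
      thus ?thesis by (simp add: lap_def a_def b'_def c_def algebra_simps)
    qed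
    have hxp: "ut t (x+1) = p - 2*a + c"
    proof -
      have "ut t (x+1) = lap (u t) (x+1)" using heat t0 inB(2) by blast
      thus ?thesis by (simp add: lap_def a_def p_def c_def algebra_simps)
    qed
    have hxm: "ut t (x-1) = c - 2*b' + q"
    proof -
      have "ut t (x-1) = lap (u t) (x-1)" using heat t0 inB(3) by blast
      thus ?thesis by (simp add: lap_def b'_def q_def c_def algebra_simps)
    qed
    have dpsi: "d\<psi> x t = - ((p + c - 2*a)/a + (q + c - 2*b')/b' - 2*(a + b' - 2*c)/c)"
      unfolding d\<psi>_def hx hxp hxm a_def[symmetric] b'_def[symmetric] c_def[symmetric]
      using a b' c by (simp add: field_simps)
    define k where "k = 2 * int r - \<bar>x - x0\<bar>"
    have k1: "k \<ge> 1" using xb by (simp add: k_def)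
    have hhx: "hh x = 2 / real_of_int k" by (simp add: hh_def k_def)
    have hpos: "hh x > 0" by (rule hhpos[OF xS])
    have eq: "2 * ln c - ln a - ln b' = \<phi> t + hh x"
      using z by (simp add: \<Phi>_def \<psi>_def a_def b'_def c_def)
    have sp: "(2 * ln a - ln p - ln c \<le> \<phi> t + hh (x+1) \<and> hh (x+1) - hh x \<le> (hh x)^2) \<or> hh x \<ge> 1"
    proof (cases "x+1 \<in> S")
      case True
      have "\<Phi> (x+1) t \<le> 0" using le True by blast
      hence A: "2 * ln a - ln p - ln c \<le> \<phi> t + hh (x+1)"
        by (simp add: \<Phi>_def \<psi>_def a_def p_def c_def)
      define k' where "k' = 2 * int r - \<bar>x + 1 - x0\<bar>"
      have k'1: "k' \<ge> 1" using True by (simp add: k'_def S_def R_def)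
      have kk: "k' = k + 1 \<or> k' = k - 1" unfolding k_def k'_def by arith
      have "hh (x+1) = 2 / real_of_int k'" by (simp add: hh_def k'_def)
      hence "hh (x+1) - hh x \<le> (hh x)^2" using hh_step[OF k1 k'1 kk] hhx by simp
      thus ?thesis using A by blast
    next
      case False
      hence "k = 1" using xb by (simp add: S_def R_def k_def)
      thus ?thesis using hhx by simp
    qed
    have sm: "(2 * ln b' - ln q - ln c \<le> \<phi> t + hh (x-1) \<and> hh (x-1) - hh x \<le> (hh x)^2) \<or> hh x \<ge> 1"
    proof (cases "x-1 \<in> S")
      case True
      have "\<Phi> (x-1) t \<le> 0" using le True by blast
      hence A: "2 * ln b' - ln q - ln c \<le> \<phi> t + hh (x-1)"
        by (simp add: \<Phi>_def \<psi>_def b'_def q_def c_def)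
      define k' where "k' = 2 * int r - \<bar>x - 1 - x0\<bar>"
      have k'1: "k' \<ge> 1" using True by (simp add: k'_def S_def R_def)
      have kk: "k' = k + 1 \<or> k' = k - 1" unfolding k_def k'_def by arith
      have "hh (x-1) = 2 / real_of_int k'" by (simp add: hh_def k'_def)
      hence "hh (x-1) - hh x \<le> (hh x)^2" using hh_step[OF k1 k'1 kk] hhx by simp
      thus ?thesis using A by blast
    next
      case False
      hence "k = 1" using xb by (simp add: S_def R_def k_def)
      thus ?thesis using hhx by simp
    qed
    have "(p + c - 2*a)/a + (q + c - 2*b')/b' - 2*(a + b' - 2*c)/c > F57 (\<phi> t)"
      by (rule core[OF a b' c p q phipos[OF t] hpos eq sp sm])
    thus ?thesis using dpsi by simp
  qed
  have claim: "\<forall>y\<in>S. \<forall>t>0. \<Phi> y t < 0"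
  proof (rule ccontr)
    assume "\<not> ?thesis"
    then obtain x1 t1 where x1: "x1 \<in> S" and t1: "t1 > 0" and P1: "\<Phi> x1 t1 \<ge> 0"
      by (auto simp: not_less)
    define e where "e = b/2"
    have e: "e > 0" "e < b" using b by (auto simp: e_def)
    have t1b: "t1 \<ge> b"
    proof (rule ccontr)
      assume "\<not> t1 \<ge> b"
      hence "\<Phi> x1 t1 < 0" using bP[of t1] t1 x1 by auto
      thus False using P1 by simp
    qed
    define Z where "Z = (\<Union>y\<in>S. {e..t1} \<inter> \<Phi> y -` {0..})"
    have cZ: "closed Z" unfolding Z_def
    proof (intro closed_UN finS ballI continuous_closed_preimage)
      fix y assume "y \<in> S"
      show "continuous_on {e..t1} (\<Phi> y)"
        using e by (intro continuous_at_imp_continuous_on ballI \<Phi>cont) auto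
    qed auto
    have bZ: "bounded Z" by (rule bounded_subset[of "{e..t1}"]) (auto simp: Z_def)
    have "compact Z" using cZ bZ by (simp add: compact_eq_bounded_closed)
    moreover have "t1 \<in> Z" using x1 P1 t1b e by (auto simp: Z_def)
    ultimately obtain ts where tsZ: "ts \<in> Z" and tsmin: "\<And>s. s \<in> Z \<Longrightarrow> ts \<le> s"
      using compact_attains_inf by (metis empty_iff)
    from tsZ obtain x where xS: "x \<in> S" and ets: "e \<le> ts" "ts \<le> t1" and Px: "\<Phi> x ts \<ge> 0"
      by (auto simp: Z_def)
    have ts0: "ts > 0" using ets e by simp
    have before: "\<forall>y\<in>S. \<Phi> y s < 0" if s: "0 < s" "s < ts" for s
    proof (cases "s < b")
      case True thus ?thesis using bP s by blast
    next
      case False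
      show ?thesis
      proof (rule ccontr)
        assume "\<not> ?thesis"
        then obtain y where "y \<in> S" "\<Phi> y s \<ge> 0" by (auto simp: not_less)
        hence "s \<in> Z" using False e s ets by (auto simp: Z_def)
        thus False using tsmin s by fastforce
      qed
    qed
    have leall: "\<forall>y\<in>S. \<Phi> y ts \<le> 0"
    proof
      fix y assume yS: "y \<in> S"
      have "(\<Phi> y \<longlongrightarrow> \<Phi> y ts) (at_left ts)"
        using \<Phi>cont[OF ts0, of y] unfolding isCont_def by (rule tendsto_within_subset) auto
      moreover have "eventually (\<lambda>s. 0 \<ge> \<Phi> y s) (at_left ts)"
        unfolding eventually_at_left_field using ts0 before yS
        by (intro exI[of _ 0]) (auto intro: less_imp_le)
      ultimately show "\<Phi> y ts \<le> 0"
        by (rule tendsto_upperbound) simp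
    qed
    hence z: "\<Phi> x ts = 0" using Px xS by (meson order.antisym)
    have neg: "d\<psi> x ts + F57 (\<phi> ts) < 0" by (rule touch[OF ts0 xS z leall])
    obtain d where d: "d > 0" and dP: "\<And>h. h > 0 \<Longrightarrow> h < d \<Longrightarrow> \<Phi> x ts < \<Phi> x (ts - h)"
      using DERIV_neg_dec_left[OF \<Phi>der[OF ts0] neg] by blast
    define h where "h = min (d/2) (ts/2)"
    have h: "h > 0" "h < d" "h < ts" using d ts0 by (auto simp: h_def)
    have "\<Phi> x ts < \<Phi> x (ts - h)" using dP h by blast
    moreover have "\<Phi> x (ts - h) < 0" using before[of "ts - h"] h xS by auto
    ultimately show False using z by simp
  qed
  show ?thesis
  proof (intro allI impI ballI)
    fix t :: real and x :: int assume t: "t > 0" and x: "x \<in> cball_Z x0 r"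
    have xb: "\<bar>x - x0\<bar> \<le> int r" using x by (simp add: cball_Z_def)
    have xS: "x \<in> S" using xb r by (simp add: S_def R_def)
    define a where "a = u t (x+1)"
    define b' where "b' = u t (x-1)"
    define c where "c = u t x"
    have a: "a > 0" and b': "b' > 0" and c: "c > 0"
      using pos t by (auto simp: a_def b'_def c_def)
    have "\<Phi> x t < 0" using claim xS t by blast
    hence psi: "2 * ln c - ln a - ln b' < \<phi> t + hh x" by (simp add: \<Phi>_def \<psi>_def a_def b'_def c_def)
    have hhr: "hh x \<le> 2 / real r"
    proof -
      have "real_of_int (2 * int r - \<bar>x - x0\<bar>) \<ge> real r" using xb by simp
      moreover have "real r > 0" using r by simp
      ultimately show ?thesis unfolding hh_def by (intro divide_left_mono) auto
    qed
    have dd: "deriv (\<lambda>s. ln (u s x)) t = ut t x / u t x" by (rule DERIV_imp_deriv[OF lnder[OF t]])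
    have inB: "x \<in> cball_Z x0 (2*r)" using xb by (auto simp: cball_Z_def)
    have ut: "ut t x = a - 2*c + b'"
    proof -
      have "ut t x = lap (u t) x" using heat t inB by auto
      thus ?thesis by (simp add: lap_def a_def b'_def c_def algebra_simps)
    qed
    have dd2: "deriv (\<lambda>s. ln (u s x)) t = a/c + b'/c - 2"
      unfolding dd ut c_def[symmetric] using c by (simp add: field_simps)
    have Ps: "Psi Upsilon (\<lambda>y. ln (u t y)) x = (a/c - 1 - (ln a - ln c)) + (b'/c - 1 - (ln b' - ln c))"
      unfolding Psi_def Upsilon_def a_def[symmetric] b'_def[symmetric] c_def[symmetric]
      using a b' c by (simp add: exp_diff)
    show "deriv (\<lambda>s. ln (u s x)) t \<ge> Psi Upsilon (\<lambda>y. ln (u t y)) x - \<phi> t - 2 / real r"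
      unfolding dd2 Ps using psi hhr by linarith
  qed
qed



theorem theorem5p7:
  "\<exists>C>0. \<forall>(x0::int) (r::nat) (u::real \<Rightarrow> int \<Rightarrow> real) (ut::real \<Rightarrow> int \<Rightarrow> real) (\<phi>::real \<Rightarrow> real).
     r > 0 \<and>
     (\<forall>t\<ge>0. \<forall>x. u t x > 0) \<and>
     (\<forall>x. \<forall>t\<ge>0. ((\<lambda>s. u s x) has_real_derivative ut t x) (at t within {0..})) \<and>
     (\<forall>x. continuous_on {0..} (\<lambda>t. ut t x)) \<and>
     (\<forall>t\<ge>0. \<forall>x\<in>cball_Z x0 (2 * r). ut t x = lap (u t) x) \<and>
     is_relaxation_function F57 \<phi>
     \<longrightarrow> (\<forall>t>0. \<forall>x\<in>cball_Z x0 r.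
           deriv (\<lambda>s. ln (u s x)) t \<ge> Psi Upsilon (\<lambda>y. ln (u t y)) x - \<phi> t - C / real r)"
  apply (rule exI[of _ 2])
  using main by auto


end
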